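(* Let $p$ be a prime and $k\ge0$ an integer; put $f=2$ if $p=2$ and $f=1$ if $p>2$, and $d=f\cdot p^{2k}$. Let $r$ be a positive integer with $r\ge\lceil\sqrt{f d/2}\,\rceil$ such that, if $d>1$, then $p\nmid r$. Put $n=p^k r$ and $$a=2n+d=2p^kr+f p^{2k},\qquad b=2n+\frac{2n^2}{d}=2p^kr+\frac{2r^2}{f},\qquad c=b+d=2p^kr+\frac{2r^2}{f}+fp^{2k}.$$ Then $(a,b,c)$ is an IDPT. Moreover, every IDPT $(a,b,c)$ with $c-b=f\cdot p^{2k}$ arises in this way from some such $r$.
   Context: A Diophantine Pythagorean Triangle (DPT) is a triple $(a,b,c)$ of positive integers with $a<b<c$ and $a^2+b^2=c^2$. An IDPT is a DPT with $\gcd(a,b,c)=1$. $\lceil x\rceil$ is the smallest integer $\ge x$. *)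

theory Defs
  imports Complex_Main "HOL-Computational_Algebra.Primes"
begin

definition DPT :: "nat \<Rightarrow> nat \<Rightarrow> nat \<Rightarrow> bool" where
  "DPT a b c \<longleftrightarrow> 0 < a \<and> a < b \<and> b < c \<and> a^2 + b^2 = c^2"

definition IDPT :: "nat \<Rightarrow> nat \<Rightarrow> nat \<Rightarrow> bool" where
  "IDPT a b c \<longleftrightarrow> DPT a b c \<and> gcd (gcd a b) c = 1"

end

theory Submission
  imports Defs
begin

lemma ceil_sqrt_iff:
  fixes r m :: nat
  shows "int r \<ge> \<lceil>sqrt (real m / 2)\<rceil> \<longleftrightarrow> m \<le> 2 * r^2"
proof -
  have "int r \<ge> \<lceil>sqrt (real m / 2)\<rceil> \<longleftrightarrow> sqrt (real m / 2) \<le> sqrt ((real r)^2)"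
    by (simp add: ceiling_le_iff)
  also have "\<dots> \<longleftrightarrow> real m / 2 \<le> (real r)^2" by (rule real_sqrt_le_iff)
  also have "\<dots> \<longleftrightarrow> real m \<le> real (2 * r^2)" by (simp add: mult.commute)
  also have "\<dots> \<longleftrightarrow> m \<le> 2 * r^2" by linarith
  finally show ?thesis .
qed

lemma odd_fwd:
  fixes p k q r :: nat
  assumes p: "prime p" "p \<noteq> 2" and q: "q = p ^ k" and r: "0 < r" "q^2 \<le> 2*r^2"
    and nd: "q^2 > 1 \<longrightarrow> \<not> p dvd r"
  shows "IDPT (2*q*r + q^2) (2*q*r + 2*r^2) (2*q*r + 2*r^2 + q^2)"
proof -
  have oddp: "odd p" using p prime_odd_nat prime_gt_1_nat by (metis less_le prime_ge_2_nat)
  have oddq: "odd q" using oddp q by simp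
  have ne: "q^2 \<noteq> 2*r^2" proof
    assume "q^2 = 2*r^2" then have "even (q^2)" by simp
    then show False using oddq by simp
  qed
  have lt: "q^2 < 2*r^2" using ne r by simp
  have q0: "q > 0" using q p prime_gt_0_nat by simp
  have dpt: "DPT (2*q*r + q^2) (2*q*r + 2*r^2) (2*q*r + 2*r^2 + q^2)"
    unfolding DPT_def using lt q0 r by (auto simp: power2_eq_square algebra_simps)
  have cop: "coprime (2*q*r + 2*r^2) (q^2)"
  proof (cases "k = 0")
    case True then show ?thesis using q by simp
  next
    case False
    have "p > 1" using p prime_gt_1_nat by blast
    then have "q > 1" using q False by (metis bot_nat_0.not_eq_extremum one_less_power)
    then have "q^2 > 1" by (metis less_1_mult power2_eq_square)
    then have npr: "\<not> p dvd r" using nd by simp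
    have pq: "p dvd q" using q False by simp
    have "\<not> p dvd (2*q*r + 2*r^2)"
    proof
      assume h: "p dvd (2*q*r + 2*r^2)"
      have "p dvd 2*q*r" using pq by simp
      then have "p dvd 2*r^2" using h by (simp add: dvd_add_right_iff)
      then have "p dvd 2 \<or> p dvd r" using p(1) by (simp add: prime_dvd_mult_iff prime_dvd_power_iff)
      moreover have "\<not> p dvd 2" proof
        assume "p dvd 2" then have "p \<le> 2" by (rule dvd_imp_le) simp
        then show False using p(2) prime_gt_1_nat[OF p(1)] by linarith
      qed 
      ultimately show False using npr by blast
    qed
    then have "coprime (2*q*r + 2*r^2) p" using p(1) by (simp add: prime_imp_coprime coprime_commute)
    then have "coprime (2*q*r + 2*r^2) (p^(2*k))" by simp
    then show ?thesis using q by (simp add: power_mult[symmetric] mult.commute)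
  qed
  have "gcd (gcd (2*q*r + q^2) (2*q*r + 2*r^2)) (2*q*r + 2*r^2 + q^2) = 1"
  proof -
    let ?g = "gcd (gcd (2*q*r + q^2) (2*q*r + 2*r^2)) (2*q*r + 2*r^2 + q^2)"
    have "?g dvd (2*q*r + 2*r^2)" by (meson dvd_trans gcd_dvd1 gcd_dvd2)
    moreover have "?g dvd (2*q*r + 2*r^2 + q^2)" by simp
    ultimately have "?g dvd q^2" using dvd_add_right_iff[of ?g "2*q*r + 2*r^2" "q^2"] by blast
    with \<open>?g dvd (2*q*r + 2*r^2)\<close> cop show ?thesis
      by (metis coprime_common_divisor_nat)
  qed
  then show ?thesis using dpt unfolding IDPT_def by simp
qed


lemma odd_bwd:
  fixes p k q a b c :: nat
  assumes p: "prime p" "p \<noteq> 2" and q: "q = p ^ k" and I: "IDPT a b c" and cb: "c - b = q^2"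
  shows "\<exists>r. 0 < r \<and> q^2 < 2*r^2 \<and> (q^2 > 1 \<longrightarrow> \<not> p dvd r) \<and>
             a = 2*q*r + q^2 \<and> b = 2*q*r + 2*r^2 \<and> c = b + q^2"
proof -
  have oddp: "odd p" using p prime_odd_nat prime_gt_1_nat by (metis less_le prime_ge_2_nat)
  have oddq: "odd q" using oddp q by simp
  have q0: "q > 0" using q p prime_gt_0_nat by simp
  from I have a0: "0 < a" and ab: "a < b" and bc: "b < c" and pyth: "a^2 + b^2 = c^2"
    and g: "gcd (gcd a b) c = 1" unfolding IDPT_def DPT_def by auto
  have c: "c = b + q^2" using cb bc by simp
  have "a^2 + b^2 = b^2 + q^2*(2*b+q^2)" using pyth c by (simp add: power2_eq_square algebra_simps)
  then have a2: "a^2 = q^2*(2*b+q^2)" by simp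
  then have "q^2 dvd a^2" by simp
  then have "q dvd a" using pow_divides_pow_iff[of 2] by simp
  then obtain m where m: "a = q*m" by blast
  have "q^2 * m^2 = q^2*(2*b+q^2)" using a2 m by (simp add: power_mult_distrib)
  then have m2: "m^2 = 2*b+q^2" using q0 by simp
  have "odd (m^2)" using m2 oddq by simp
  then have oddm: "odd m" by simp
  have "q^2 < m^2" using m2 ab by simp
  then have qm: "q < m" using power_less_imp_less_base by blast
  have "even (m - q)" using oddm oddq qm by simp
  then obtain r where r: "m - q = 2*r" by blast
  have mr: "m = q + 2*r" using r qm by simp
  have aa: "a = 2*q*r + q^2" using m mr by (simp add: power2_eq_square algebra_simps)
  have "(q + 2*r)^2 = 2*b + q^2" using m2 mr by simp
  then have "4*q*r + 4*r^2 + q^2 = 2*b + q^2" by (simp add: power2_eq_square algebra_simps)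
  then have bb: "b = 2*q*r + 2*r^2" by simp
  have lt: "q^2 < 2*r^2" using ab aa bb by simp
  then have r0: "0 < r" by (cases r) auto
  have nd: "\<not> p dvd r" if "q^2 > 1"
  proof
    assume pr: "p dvd r"
    have "k \<noteq> 0"
    proof
      assume "k = 0" then have "q = 1" using q by simp
      then show False using that by simp
    qed
    then have pq: "p dvd q" using q by simp
    have "p dvd a" unfolding aa using pq by (intro dvd_add) (auto simp: power2_eq_square)
    moreover have "p dvd b" unfolding bb using pr by (intro dvd_add) (auto simp: power2_eq_square)
    moreover have "p dvd c" unfolding c using pq \<open>p dvd b\<close> by (intro dvd_add) (auto simp: power2_eq_square)
    ultimately have "p dvd gcd (gcd a b) c" by simp
    then show False using g p prime_gt_1_nat by simp
  qed
  show ?thesis using r0 lt nd aa bb c by blast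
qed

lemma two_fwd:
  fixes k q r :: nat
  assumes q: "q = 2 ^ k" and r: "0 < r" "2*q^2 \<le> r^2" and oddr: "odd r"
  shows "IDPT (2*q*r + 2*q^2) (2*q*r + r^2) (2*q*r + r^2 + 2*q^2)"
proof -
  have ne: "2*q^2 \<noteq> r^2"
  proof
    assume "2*q^2 = r^2" then show False using oddr by (metis dvd_triv_left even_power pos2)
  qed
  have lt: "2*q^2 < r^2" using ne r by simp
  have q0: "q > 0" using q by simp
  have dpt: "DPT (2*q*r + 2*q^2) (2*q*r + r^2) (2*q*r + r^2 + 2*q^2)"
    unfolding DPT_def using lt q0 r by (auto simp: power2_eq_square algebra_simps)
  have oddb: "odd (2*q*r + r^2)" using oddr by simp
  have "coprime (2*q*r + r^2) 2" using oddb by (simp add: coprime_commute)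
  then have "coprime (2*q*r + r^2) (2^(2*k+1))" by simp
  then have cop: "coprime (2*q*r + r^2) (2*q^2)" using q by (simp add: power_mult[symmetric] mult.commute)
  have "gcd (gcd (2*q*r + 2*q^2) (2*q*r + r^2)) (2*q*r + r^2 + 2*q^2) = 1"
  proof -
    let ?g = "gcd (gcd (2*q*r + 2*q^2) (2*q*r + r^2)) (2*q*r + r^2 + 2*q^2)"
    have "?g dvd (2*q*r + r^2)" by (meson dvd_trans gcd_dvd1 gcd_dvd2)
    moreover have "?g dvd (2*q*r + r^2 + 2*q^2)" by simp
    ultimately have "?g dvd 2*q^2" using dvd_add_right_iff[of ?g "2*q*r + r^2" "2*q^2"] by blast
    with \<open>?g dvd (2*q*r + r^2)\<close> cop show ?thesis
      by (metis coprime_common_divisor_nat)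
  qed
  then show ?thesis using dpt unfolding IDPT_def by simp
qed

lemma two_bwd:
  fixes k q a b c :: nat
  assumes q: "q = 2 ^ k" and I: "IDPT a b c" and cb: "c - b = 2*q^2"
  shows "\<exists>r. 0 < r \<and> 2*q^2 < r^2 \<and> odd r \<and>
             a = 2*q*r + 2*q^2 \<and> b = 2*q*r + r^2 \<and> c = b + 2*q^2"
proof -
  have q0: "q > 0" using q by simp
  from I have a0: "0 < a" and ab: "a < b" and bc: "b < c" and pyth: "a^2 + b^2 = c^2"
    and g: "gcd (gcd a b) c = 1" unfolding IDPT_def DPT_def by auto
  have c: "c = b + 2*q^2" using cb bc by simp
  have "a^2 + b^2 = b^2 + (2*q)^2*(b+q^2)" using pyth c by (simp add: power2_eq_square algebra_simps)
  then have a2: "a^2 = (2*q)^2*(b+q^2)" by simp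
  then have "(2*q)^2 dvd a^2" by simp
  then have "2*q dvd a" by (metis pow_divides_pow_iff zero_less_numeral)
  then obtain m where m: "a = (2*q)*m" by blast
  have "(2*q)^2 * m^2 = (2*q)^2*(b+q^2)" using a2 m by (simp add: power_mult_distrib)
  then have m2: "m^2 = b+q^2" using q0 by simp
  have "q^2 < m^2" using m2 ab by simp
  then have qm: "q < m" using power_less_imp_less_base by blast
  define r where "r = m - q"
  have mr: "m = q + r" using r_def qm by simp
  have aa: "a = 2*q*r + 2*q^2" using m mr by (simp add: power2_eq_square algebra_simps)
  have "(q + r)^2 = b + q^2" using m2 mr by simp
  then have "2*q*r + r^2 + q^2 = b + q^2" by (simp add: power2_eq_square algebra_simps)
  then have bb: "b = 2*q*r + r^2" by simp
  have lt: "2*q^2 < r^2" using ab aa bb by simp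
  then have r0: "0 < r" by (cases r) auto
  have oddr: "odd r"
  proof
    assume er: "even r"
    have "2 dvd a" using aa by simp
    moreover have "2 dvd b" using bb er by simp
    moreover have "2 dvd c" using c \<open>2 dvd b\<close> by simp
    ultimately have "2 dvd gcd (gcd a b) c" by simp
    then show False using g by simp
  qed
  show ?thesis using r0 lt oddr aa bb c by blast
qed


theorem theorem4:
  fixes p k :: nat
  assumes "prime p"
  defines "f \<equiv> (if p = 2 then 2 else 1 :: nat)"
  defines "d \<equiv> f * p ^ (2 * k)"
  shows "(\<forall>r::nat. 0 < r \<and> int r \<ge> \<lceil>sqrt (real (f * d) / 2)\<rceil> \<and> (d > 1 \<longrightarrow> \<not> p dvd r) \<longrightarrow>
            (let n = p ^ k * r; a = 2 * n + d; b = 2 * n + (2 * n ^ 2) div d; c = b + d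
             in IDPT a b c))
       \<and> (\<forall>a b c :: nat. IDPT a b c \<and> c - b = d \<longrightarrow>
            (\<exists>r::nat. 0 < r \<and> int r \<ge> \<lceil>sqrt (real (f * d) / 2)\<rceil> \<and> (d > 1 \<longrightarrow> \<not> p dvd r) \<and>
               (let n = p ^ k * r in a = 2 * n + d \<and> b = 2 * n + (2 * n ^ 2) div d \<and> c = b + d)))"
proof -
  define q where "q = p ^ k"
  have q0: "q > 0" using assms(1) prime_gt_0_nat q_def by simp
  have pk: "p ^ (2*k) = q^2" unfolding q_def by (simp add: power_mult[symmetric] mult.commute)
  show ?thesis
  proof (cases "p = 2")
    case True
    have f: "f = 2" using True f_def by simp
    have d: "d = 2*q^2" using d_def f pk by simp
    have fd: "f * d = 4*q^2" using f d by simp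
    have dv: "\<And>r. (2 * (q*r)^2) div (2*q^2) = r^2" using q0 by (simp add: power_mult_distrib)
    have q2: "q = 2^k" using q_def True by simp
    have "q^2 > 0" using q0 by simp
    then have d1: "d > 1" using d by linarith
    show ?thesis
    proof (intro conjI allI impI)
      fix r :: nat
      assume h: "0 < r \<and> int r \<ge> \<lceil>sqrt (real (f * d) / 2)\<rceil> \<and> (d > 1 \<longrightarrow> \<not> p dvd r)"
      have c1: "2*q^2 \<le> r^2" using h ceil_sqrt_iff[where r=r and m="f*d"] fd by simp
      have c2: "odd r" using h d1 True by simp
      have "IDPT (2*q*r + 2*q^2) (2*q*r + r^2) (2*q*r + r^2 + 2*q^2)"
        using two_fwd[OF q2 _ c1 c2] h by simp
      then show "let n = p ^ k * r; a = 2 * n + d; b = 2 * n + (2 * n ^ 2) div d; c = b + d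
             in IDPT a b c" unfolding Let_def q_def[symmetric] d dv by (simp add: algebra_simps)
    next
      fix a b c :: nat
      assume h: "IDPT a b c \<and> c - b = d"
      then obtain r where r: "0 < r \<and> 2*q^2 < r^2 \<and> odd r \<and>
             a = 2*q*r + 2*q^2 \<and> b = 2*q*r + r^2 \<and> c = b + 2*q^2"
        using two_bwd[OF q2, of a b c] d by auto
      have "int r \<ge> \<lceil>sqrt (real (f * d) / 2)\<rceil>" using ceil_sqrt_iff[where r=r and m="f*d"] fd r by simp
      moreover have "\<not> p dvd r" using r True by simp
      moreover have "let n = p ^ k * r in a = 2 * n + d \<and> b = 2 * n + (2 * n ^ 2) div d \<and> c = b + d"
        unfolding Let_def q_def[symmetric] d dv using r by (simp add: algebra_simps)
      ultimately show "\<exists>r::nat. 0 < r \<and> int r \<ge> \<lceil>sqrt (real (f * d) / 2)\<rceil> \<and> (d > 1 \<longrightarrow> \<not> p dvd r) \<and>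
               (let n = p ^ k * r in a = 2 * n + d \<and> b = 2 * n + (2 * n ^ 2) div d \<and> c = b + d)"
        using r by blast
    qed
  next
    case False
    have f: "f = 1" using False f_def by simp
    have d: "d = q^2" using d_def f pk by simp
    have fd: "f * d = q^2" using f d by simp
    have dv: "\<And>r. (2 * (q*r)^2) div (q^2) = 2*r^2" using q0 by (simp add: power_mult_distrib)
    show ?thesis
    proof (intro conjI allI impI)
      fix r :: nat
      assume h: "0 < r \<and> int r \<ge> \<lceil>sqrt (real (f * d) / 2)\<rceil> \<and> (d > 1 \<longrightarrow> \<not> p dvd r)"
      have c1: "q^2 \<le> 2*r^2" using h ceil_sqrt_iff[where r=r and m="f*d"] fd by simp
      have c2: "q^2 > 1 \<longrightarrow> \<not> p dvd r" using h d by simp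
      have "IDPT (2*q*r + q^2) (2*q*r + 2*r^2) (2*q*r + 2*r^2 + q^2)"
        using odd_fwd[OF assms(1) False q_def _ c1 c2] h by simp
      then show "let n = p ^ k * r; a = 2 * n + d; b = 2 * n + (2 * n ^ 2) div d; c = b + d
             in IDPT a b c" unfolding Let_def q_def[symmetric] d dv by (simp add: algebra_simps)
    next
      fix a b c :: nat
      assume h: "IDPT a b c \<and> c - b = d"
      then obtain r where r: "0 < r \<and> q^2 < 2*r^2 \<and> (q^2 > 1 \<longrightarrow> \<not> p dvd r) \<and>
             a = 2*q*r + q^2 \<and> b = 2*q*r + 2*r^2 \<and> c = b + q^2"
        using odd_bwd[OF assms(1) False q_def, of a b c] d by auto
      have "int r \<ge> \<lceil>sqrt (real (f * d) / 2)\<rceil>" using ceil_sqrt_iff[where r=r and m="f*d"] fd r by simp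
      moreover have "d > 1 \<longrightarrow> \<not> p dvd r" using r d by simp
      moreover have "let n = p ^ k * r in a = 2 * n + d \<and> b = 2 * n + (2 * n ^ 2) div d \<and> c = b + d"
        unfolding Let_def q_def[symmetric] d dv using r by (simp add: algebra_simps)
      ultimately show "\<exists>r::nat. 0 < r \<and> int r \<ge> \<lceil>sqrt (real (f * d) / 2)\<rceil> \<and> (d > 1 \<longrightarrow> \<not> p dvd r) \<and>
               (let n = p ^ k * r in a = 2 * n + d \<and> b = 2 * n + (2 * n ^ 2) div d \<and> c = b + d)"
        using r by blast
    qed
  qed
qed

end
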